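(* $\widetilde{\mathbb{K}}_{sm}$ is not an exchange ring, i.e., there exists $r\in\widetilde{\mathbb{K}}_{sm}$ such that $r+e$ is not invertible for every idempotent $e\in\widetilde{\mathbb{K}}_{sm}$.
   Context: Let $I=(0,1]$ and $\mathbb{K}\in\{\mathbb{R},\mathbb{C}\}$. $\mathcal{E}_{M,sm}$ is the set of nets $(r_\varepsilon)_{\varepsilon\in I}\in\mathbb{K}^I$ with $\varepsilon\mapsto r_\varepsilon$ smooth on $I$ and $|r_\varepsilon|=O(\varepsilon^{-N})$ as $\varepsilon\to0$ for some $N\in\mathbb{N}$; $\mathcal{N}_{sm}$ is the set of smooth nets with $|r_\varepsilon|=O(\varepsilon^m)$ for all $m\in\mathbb{N}$; $\widetilde{\mathbb{K}}_{sm}=\mathcal{E}_{M,sm}/\mathcal{N}_{sm}$. A commutative ring $R$ with $1$ is an exchange ring if for each $r\in R$ there is an idempotent $e\in R$ with $r+e$ invertible. *)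

theory Defs
  imports "HOL-Analysis.Analysis"
begin

text \<open>The index set I = (0,1]. Nets are represented as functions real => 'a;
  only their values on I matter.\<close>

definition Iset :: "real set" where "Iset = {0<..1}"

definition smooth_net :: "(real \<Rightarrow> 'a::real_normed_vector) \<Rightarrow> bool" where
  "smooth_net r \<longleftrightarrow> (\<exists>D :: nat \<Rightarrow> real \<Rightarrow> 'a.
      (\<forall>t\<in>Iset. D 0 t = r t) \<and>
      (\<forall>k. \<forall>t\<in>Iset. (D k has_vector_derivative D (Suc k) t) (at t within Iset)))"

definition EM_sm :: "(real \<Rightarrow> 'a::real_normed_vector) set" where
  "EM_sm = {r. smooth_net r \<and>
     (\<exists>N::nat. \<exists>C::real. \<forall>\<^sub>F \<epsilon> in at_right 0. norm (r \<epsilon>) \<le> C * inverse (\<epsilon> ^ N))}"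

definition N_sm :: "(real \<Rightarrow> 'a::real_normed_vector) set" where
  "N_sm = {r. smooth_net r \<and>
     (\<forall>m::nat. \<exists>C::real. \<forall>\<^sub>F \<epsilon> in at_right 0. norm (r \<epsilon>) \<le> C * \<epsilon> ^ m)}"

text \<open>Working with representatives in EM_sm of classes of the quotient ring
  K~_sm = EM_sm / N_sm (ring operations are pointwise).\<close>

definition idempotent_sm :: "(real \<Rightarrow> 'a::real_normed_field) \<Rightarrow> bool" where
  "idempotent_sm e \<longleftrightarrow> e \<in> EM_sm \<and> (\<lambda>\<epsilon>. e \<epsilon> * e \<epsilon> - e \<epsilon>) \<in> N_sm"

definition invertible_sm :: "(real \<Rightarrow> 'a::real_normed_field) \<Rightarrow> bool" where
  "invertible_sm u \<longleftrightarrow> u \<in> EM_sm \<and> (\<exists>s\<in>EM_sm. (\<lambda>\<epsilon>. u \<epsilon> * s \<epsilon> - 1) \<in> N_sm)"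

end

theory Submission
  imports Defs "HOL-Complex_Analysis.Complex_Analysis"
begin

lemma smooth_cont:
  assumes "smooth_net (e::real \<Rightarrow> 'a::real_normed_vector)"
  shows "continuous_on Iset e"
proof -
  obtain D where D0: "\<forall>t\<in>Iset. D 0 t = e t"
    and DD: "\<forall>k. \<forall>t\<in>Iset. (D k has_vector_derivative D (Suc k) t) (at t within Iset)"
    using assms unfolding smooth_net_def by blast
  have "continuous_on Iset (D 0)"
    using DD by (intro continuous_on_vector_derivative) blast
  then show ?thesis using D0 continuous_on_cong by fastforce
qed

lemma contra_at:
  fixes u s w :: "real \<Rightarrow> 'a::real_normed_field"
  assumes b: "b > 0"
    and sb: "\<forall>\<epsilon>. 0 < \<epsilon> \<and> \<epsilon> < b \<longrightarrow> norm (s \<epsilon>) \<le> Cs * inverse (\<epsilon> ^ Ns)"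
    and ub: "\<forall>\<epsilon>. 0 < \<epsilon> \<and> \<epsilon> < b \<longrightarrow> norm (u \<epsilon> * s \<epsilon> - 1) \<le> Cu * \<epsilon> ^ 1"
    and wb: "\<forall>\<epsilon>. 0 < \<epsilon> \<and> \<epsilon> < b \<longrightarrow> norm (w \<epsilon>) \<le> Cw * \<epsilon> ^ Suc Ns"
    and fr: "\<forall>\<delta>>0. \<exists>\<epsilon>. 0 < \<epsilon> \<and> \<epsilon> < \<delta> \<and> u \<epsilon> = w \<epsilon>"
  shows False
proof -
  define K where "K = \<bar>Cu\<bar> + \<bar>Cw\<bar> * \<bar>Cs\<bar> + 1"
  have K: "K > 0" unfolding K_def by (smt (verit) abs_ge_zero mult_nonneg_nonneg)
  obtain \<epsilon> where e: "0 < \<epsilon>" "\<epsilon> < min b (inverse K)" "u \<epsilon> = w \<epsilon>"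
    using fr b K by (metis inverse_positive_iff_positive min_less_iff_conj)
  have s1: "norm (s \<epsilon>) \<le> Cs * inverse (\<epsilon> ^ Ns)" using sb e by auto
  have u1: "norm (w \<epsilon> * s \<epsilon> - 1) \<le> Cu * \<epsilon>" using ub e by auto
  have w1: "norm (w \<epsilon>) \<le> Cw * \<epsilon> ^ Suc Ns" using wb e by auto
  have "norm (w \<epsilon> * s \<epsilon>) = norm (w \<epsilon>) * norm (s \<epsilon>)" by (simp add: norm_mult)
  also have "\<dots> \<le> (Cw * \<epsilon> ^ Suc Ns) * (Cs * inverse (\<epsilon> ^ Ns))"
    by (intro mult_mono s1 w1 norm_ge_zero) (use order_trans[OF norm_ge_zero w1] in simp)
  also have "\<dots> = Cw * Cs * \<epsilon>" using e(1) by (simp add: field_simps)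
  also have "\<dots> \<le> \<bar>Cw\<bar> * \<bar>Cs\<bar> * \<epsilon>" using e(1)
    by (intro mult_right_mono) (auto simp: abs_mult[symmetric])
  finally have ws: "norm (w \<epsilon> * s \<epsilon>) \<le> \<bar>Cw\<bar> * \<bar>Cs\<bar> * \<epsilon>" .
  have "1 \<le> norm (w \<epsilon> * s \<epsilon>) + norm (w \<epsilon> * s \<epsilon> - 1)"
    by (metis norm_one norm_triangle_ineq4 add.commute diff_diff_eq2 diff_self diff_zero
        norm_minus_commute order_trans order_refl norm_triangle_ineq2 le_diff_eq)
  also have "\<dots> \<le> \<bar>Cw\<bar> * \<bar>Cs\<bar> * \<epsilon> + \<bar>Cu\<bar> * \<epsilon>"
  proof -
    have "Cu * \<epsilon> \<le> \<bar>Cu\<bar> * \<epsilon>" by (rule mult_right_mono) (use e(1) in simp_all)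
    then show ?thesis using ws u1 by linarith
  qed
  also have "\<dots> < K * \<epsilon>" using e(1) unfolding K_def by (simp add: algebra_simps)
  also have "\<dots> < 1" using e K by (simp add: field_simps)
  finally have "(1::real) < 1" .
  then show False by simp
qed

lemma main_nonexchange:
  fixes r e :: "real \<Rightarrow> 'a::real_normed_field"
  assumes z0: "\<forall>\<delta>>0. \<exists>\<epsilon>. 0 < \<epsilon> \<and> \<epsilon> < \<delta> \<and> r \<epsilon> = 0"
    and z1: "\<forall>\<delta>>0. \<exists>\<epsilon>. 0 < \<epsilon> \<and> \<epsilon> < \<delta> \<and> r \<epsilon> = -1"
    and ide: "idempotent_sm e"
  shows "\<not> invertible_sm (\<lambda>\<epsilon>. r \<epsilon> + e \<epsilon>)"
proof
  assume "invertible_sm (\<lambda>\<epsilon>. r \<epsilon> + e \<epsilon>)"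
  then obtain s where sE: "s \<in> EM_sm" and uN: "(\<lambda>\<epsilon>. (r \<epsilon> + e \<epsilon>) * s \<epsilon> - 1) \<in> N_sm"
    unfolding invertible_sm_def by blast
  define u where "u = (\<lambda>\<epsilon>. r \<epsilon> + e \<epsilon>)"
  define n where "n = (\<lambda>\<epsilon>. e \<epsilon> * e \<epsilon> - e \<epsilon>)"
  have eE: "e \<in> EM_sm" and nN: "n \<in> N_sm" using ide unfolding idempotent_sm_def n_def by auto
  have econt: "continuous_on Iset e" using eE smooth_cont unfolding EM_sm_def by blast
  obtain Ns Cs where sb: "\<forall>\<^sub>F \<epsilon> in at_right 0. norm (s \<epsilon>) \<le> Cs * inverse (\<epsilon> ^ Ns)"
    using sE unfolding EM_sm_def by blast
  obtain Cu where ub: "\<forall>\<^sub>F \<epsilon> in at_right 0. norm (u \<epsilon> * s \<epsilon> - 1) \<le> Cu * \<epsilon> ^ 1"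
    using uN unfolding N_sm_def u_def by blast
  obtain Cn where nb: "\<forall>\<^sub>F \<epsilon> in at_right 0. norm (n \<epsilon>) \<le> Cn * \<epsilon> ^ Suc Ns"
    using nN unfolding N_sm_def by blast
  have sm: "\<forall>\<^sub>F \<epsilon> in at_right 0. \<epsilon> < min 1 (inverse (4 * (\<bar>Cn\<bar> + 1)))"
    unfolding eventually_at_right_field
    by (rule exI[of _ "min 1 (inverse (4 * (\<bar>Cn\<bar> + 1)))"])
      (auto simp: add_pos_nonneg)
  have "\<forall>\<^sub>F \<epsilon> in at_right 0. norm (s \<epsilon>) \<le> Cs * inverse (\<epsilon> ^ Ns) \<and>
      norm (u \<epsilon> * s \<epsilon> - 1) \<le> Cu * \<epsilon> ^ 1 \<and> norm (n \<epsilon>) \<le> Cn * \<epsilon> ^ Suc Ns \<and>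
      \<epsilon> < min 1 (inverse (4 * (\<bar>Cn\<bar> + 1)))"
    using sb ub nb sm by eventually_elim auto
  then obtain b where b: "b > 0" and
    bb: "\<And>\<epsilon>. \<epsilon> > 0 \<Longrightarrow> \<epsilon> < b \<Longrightarrow> norm (s \<epsilon>) \<le> Cs * inverse (\<epsilon> ^ Ns) \<and>
      norm (u \<epsilon> * s \<epsilon> - 1) \<le> Cu * \<epsilon> ^ 1 \<and> norm (n \<epsilon>) \<le> Cn * \<epsilon> ^ Suc Ns \<and>
      \<epsilon> < min 1 (inverse (4 * (\<bar>Cn\<bar> + 1)))"
    unfolding eventually_at_right_field by blast
  have nsmall: "norm (n \<epsilon>) < 1/4" if "0 < \<epsilon>" "\<epsilon> < b" for \<epsilon>
  proof -
    have h: "norm (n \<epsilon>) \<le> Cn * \<epsilon> ^ Suc Ns" "\<epsilon> < 1" "\<epsilon> < inverse (4 * (\<bar>Cn\<bar> + 1))"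
      using bb[OF that] by auto
    have "\<epsilon> ^ Suc Ns \<le> \<epsilon>"
      using h(2) that(1) power_decreasing[of 1 "Suc Ns" \<epsilon>] by simp
    have "Cn * \<epsilon> ^ Suc Ns \<le> \<bar>Cn\<bar> * \<epsilon> ^ Suc Ns"
      by (rule mult_right_mono) (use that(1) in simp_all)
    also have "\<dots> \<le> \<bar>Cn\<bar> * \<epsilon>"
      by (rule mult_left_mono) (use \<open>\<epsilon> ^ Suc Ns \<le> \<epsilon>\<close> in simp_all)
    also have "\<dots> < 1/4"
    proof -
      have pos: "4 * (\<bar>Cn\<bar> + 1) > 0" by (simp add: add_pos_nonneg)
      have "\<epsilon> * (4 * (\<bar>Cn\<bar> + 1)) < 1" using h(3) pos
        by (simp add: inverse_eq_divide pos_less_divide_eq)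
      moreover have "\<epsilon> * (4 * (\<bar>Cn\<bar> + 1)) = 4 * (\<bar>Cn\<bar> * \<epsilon>) + 4 * \<epsilon>"
        by (simp add: algebra_simps)
      ultimately show ?thesis using that(1) by linarith
    qed
    finally show ?thesis using h(1) by linarith
  qed
  have nprod: "norm (n \<epsilon>) = norm (e \<epsilon>) * norm (e \<epsilon> - 1)" for \<epsilon>
    unfolding n_def by (simp add: norm_mult[symmetric] algebra_simps)
  have nhalf: "norm (e \<epsilon>) \<noteq> 1/2" if "0 < \<epsilon>" "\<epsilon> < b" for \<epsilon>
  proof
    assume a: "norm (e \<epsilon>) = 1/2"
    have "norm (e \<epsilon> - 1) \<ge> 1/2"
      using norm_triangle_ineq2[of 1 "e \<epsilon>"] a by (simp add: norm_minus_commute)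
    then have "norm (n \<epsilon>) \<ge> 1/4" using nprod[of \<epsilon>] a by simp
    with nsmall[OF that] show False by simp
  qed
  define T where "T = {0<..<b}"
  have TI: "T \<subseteq> Iset"
  proof
    fix x assume "x \<in> T"
    then have "0 < x" "x < b" unfolding T_def by auto
    then have "x < 1" using bb[of x] by simp
    then show "x \<in> Iset" unfolding Iset_def using \<open>0 < x\<close> by simp
  qed
  have "continuous_on T (\<lambda>\<epsilon>. norm (e \<epsilon>))"
    using continuous_on_subset[OF econt TI] by (intro continuous_on_norm)
  then have conn: "connected ((\<lambda>\<epsilon>. norm (e \<epsilon>)) ` T)"
    by (intro connected_continuous_image) (auto simp: T_def)
  have side: "\<forall>\<epsilon>\<in>T. (norm (e \<epsilon>) < 1/2) = (norm (e (b/2)) < 1/2)"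
  proof (rule ccontr)
    assume "\<not> ?thesis"
    then obtain \<epsilon> where \<epsilon>: "\<epsilon> \<in> T" and d: "(norm (e \<epsilon>) < 1/2) \<noteq> (norm (e (b/2)) < 1/2)" by blast
    have b2: "b/2 \<in> T" using b unfolding T_def by auto
    have "1/2 \<in> (\<lambda>\<epsilon>. norm (e \<epsilon>)) ` T"
    proof (cases "norm (e \<epsilon>) < 1/2")
      case True
      then have "norm (e (b/2)) \<ge> 1/2" using d by simp
      then show ?thesis using True
        conn[unfolded connected_iff_interval, rule_format, OF imageI[OF \<epsilon>] imageI[OF b2], of "1/2"]
        by simp
    next
      case False
      then have "norm (e (b/2)) < 1/2" using d by simp
      then show ?thesis using False
        conn[unfolded connected_iff_interval, rule_format, OF imageI[OF b2] imageI[OF \<epsilon>], of "1/2"]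
        by simp
    qed
    then obtain x where "x \<in> T" "norm (e x) = 1/2" by auto
    then show False using nhalf unfolding T_def by auto
  qed
  have sb': "\<forall>\<epsilon>. 0 < \<epsilon> \<and> \<epsilon> < b \<longrightarrow> norm (s \<epsilon>) \<le> Cs * inverse (\<epsilon> ^ Ns)" using bb by blast
  have ub': "\<forall>\<epsilon>. 0 < \<epsilon> \<and> \<epsilon> < b \<longrightarrow> norm (u \<epsilon> * s \<epsilon> - 1) \<le> Cu * \<epsilon> ^ 1" using bb by blast
  show False
  proof (cases "norm (e (b/2)) < 1/2")
    case True
    have wb: "\<forall>\<epsilon>. 0 < \<epsilon> \<and> \<epsilon> < b \<longrightarrow> norm (e \<epsilon>) \<le> (2 * Cn) * \<epsilon> ^ Suc Ns"
    proof (intro allI impI)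
      fix \<epsilon> assume h: "0 < \<epsilon> \<and> \<epsilon> < b"
      then have lt: "norm (e \<epsilon>) < 1/2" using side True unfolding T_def by auto
      have "norm (e \<epsilon> - 1) \<ge> 1/2"
        using norm_triangle_ineq2[of 1 "e \<epsilon>"] lt by (simp add: norm_minus_commute)
      then have "norm (e \<epsilon>) * (1/2) \<le> norm (e \<epsilon>) * norm (e \<epsilon> - 1)"
        by (intro mult_left_mono) simp_all
      then have "norm (e \<epsilon>) * (1/2) \<le> norm (n \<epsilon>)" using nprod[of \<epsilon>] by simp
      moreover have "norm (n \<epsilon>) \<le> Cn * \<epsilon> ^ Suc Ns" using bb h by blast
      ultimately show "norm (e \<epsilon>) \<le> (2 * Cn) * \<epsilon> ^ Suc Ns" by simp
    qed
    have fr: "\<forall>\<delta>>0. \<exists>\<epsilon>. 0 < \<epsilon> \<and> \<epsilon> < \<delta> \<and> u \<epsilon> = e \<epsilon>"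
      using z0 unfolding u_def by force
    show False by (rule contra_at[OF b sb' ub' wb fr])
  next
    case False
    have wb: "\<forall>\<epsilon>. 0 < \<epsilon> \<and> \<epsilon> < b \<longrightarrow> norm (e \<epsilon> - 1) \<le> (2 * Cn) * \<epsilon> ^ Suc Ns"
    proof (intro allI impI)
      fix \<epsilon> assume h: "0 < \<epsilon> \<and> \<epsilon> < b"
      then have "\<not> norm (e \<epsilon>) < 1/2" using side False unfolding T_def by auto
      then have lt: "norm (e \<epsilon>) \<ge> 1/2" by linarith
      then have "(1/2) * norm (e \<epsilon> - 1) \<le> norm (e \<epsilon>) * norm (e \<epsilon> - 1)"
        by (intro mult_right_mono) simp_all
      then have "(1/2) * norm (e \<epsilon> - 1) \<le> norm (n \<epsilon>)" using nprod[of \<epsilon>] by simp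
      moreover have "norm (n \<epsilon>) \<le> Cn * \<epsilon> ^ Suc Ns" using bb h by blast
      ultimately show "norm (e \<epsilon> - 1) \<le> (2 * Cn) * \<epsilon> ^ Suc Ns" by simp
    qed
    have fr: "\<forall>\<delta>>0. \<exists>\<epsilon>. 0 < \<epsilon> \<and> \<epsilon> < \<delta> \<and> u \<epsilon> = e \<epsilon> - 1"
      using z1 unfolding u_def by force
    show False by (rule contra_at[OF b sb' ub' wb fr])
  qed
qed


lemma sin_inv_freq:
  fixes \<theta> \<delta> :: real
  assumes th: "\<theta> > 0" and d: "\<delta> > 0"
  shows "\<exists>\<epsilon>. 0 < \<epsilon> \<and> \<epsilon> < \<delta> \<and> sin (1/\<epsilon>) = sin \<theta>"
proof -
  obtain k :: nat where k: "inverse \<delta> < real k" using reals_Archimedean2 by blast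
  define x where "x = 2 * real k * pi + \<theta>"
  have "real k * 1 \<le> real k * (2 * pi)" by (rule mult_left_mono) (use pi_ge_two in simp_all)
  then have kpi: "real k \<le> 2 * real k * pi" by (simp add: algebra_simps)
  have x: "x > inverse \<delta>" unfolding x_def using k kpi th by linarith
  have xp: "x > 0" using x d by (smt (verit) inverse_positive_iff_positive)
  have "1/x < \<delta>" using x d xp
    by (metis inverse_eq_divide inverse_inverse_eq inverse_less_iff_less positive_imp_inverse_positive)
  moreover have "sin (1/(1/x)) = sin \<theta>" unfolding x_def
    by (simp add: sin_add)
  ultimately show ?thesis using xp by (intro exI[of _ "1/x"]) simp
qed

definition fC :: "complex \<Rightarrow> complex" where "fC z = - (1 + sin (1/z)) / 2"
definition SH :: "complex set" where "SH = {z. 0 < Re z}"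

lemma fC_holo: "fC holomorphic_on SH"
  unfolding fC_def SH_def by (auto intro!: holomorphic_intros)

lemma SH_open: "open SH" unfolding SH_def by (rule open_halfspace_Re_gt)

lemma Iset_SH: "t \<in> Iset \<Longrightarrow> complex_of_real t \<in> SH"
  unfolding Iset_def SH_def by auto

lemma fC_real: "fC (complex_of_real t) = complex_of_real (- (1 + sin (1/t)) / 2)"
  unfolding fC_def by (simp add: sin_of_real[symmetric])

lemma higher_deriv_vec:
  assumes "t \<in> Iset"
  shows "((\<lambda>x. (deriv ^^ k) fC (complex_of_real x)) has_vector_derivative
           deriv ((deriv ^^ k) fC) (complex_of_real t)) (at t within Iset)"
proof -
  have "((deriv ^^ k) fC has_field_derivative deriv ((deriv ^^ k) fC) (complex_of_real t))
          (at (complex_of_real t))"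
    using holomorphic_derivI[OF holomorphic_higher_deriv[OF fC_holo SH_open] SH_open Iset_SH[OF assms]]
    by blast
  then show ?thesis by (simp add: has_vector_derivative_real_field)
qed

lemma smooth_C: "smooth_net (\<lambda>t. complex_of_real (- (1 + sin (1/t)) / 2))"
  unfolding smooth_net_def
  by (rule exI[of _ "\<lambda>k x. (deriv ^^ k) fC (complex_of_real x)"])
     (simp add: higher_deriv_vec fC_real)

lemma smooth_R: "smooth_net (\<lambda>t. - (1 + sin (1/t)) / 2 :: real)"
  unfolding smooth_net_def
proof (rule exI[of _ "\<lambda>k x. Re ((deriv ^^ k) fC (complex_of_real x))"], intro conjI ballI allI)
  fix t assume "t \<in> Iset" then show "Re ((deriv ^^ 0) fC (complex_of_real t)) = - (1 + sin (1/t)) / 2"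
    by (simp add: fC_real)
next
  fix k t assume "t \<in> Iset"
  from has_field_derivative_Re[OF higher_deriv_vec[OF this, of k]]
  show "((\<lambda>x. Re ((deriv ^^ k) fC (complex_of_real x))) has_vector_derivative
          Re ((deriv ^^ Suc k) fC (complex_of_real t))) (at t within Iset)"
    by (simp add: has_real_derivative_iff_has_vector_derivative)
qed

lemma bound_sin: "norm (- (1 + sin x) / 2 :: real) \<le> 1"
  using sin_ge_minus_one[of x] sin_le_one[of x] by auto

theorem lemma4p3:
  shows "(\<exists>r::real \<Rightarrow> real. r \<in> EM_sm \<and>
            (\<forall>e. idempotent_sm e \<longrightarrow> \<not> invertible_sm (\<lambda>\<epsilon>. r \<epsilon> + e \<epsilon>)))
       \<and> (\<exists>r::real \<Rightarrow> complex. r \<in> EM_sm \<and>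
            (\<forall>e. idempotent_sm e \<longrightarrow> \<not> invertible_sm (\<lambda>\<epsilon>. r \<epsilon> + e \<epsilon>)))"
proof (intro conjI)
  have s0: "\<forall>\<delta>>0. \<exists>\<epsilon>::real. 0 < \<epsilon> \<and> \<epsilon> < \<delta> \<and> sin (1/\<epsilon>) = -1"
  proof (intro allI impI)
    fix \<delta> :: real assume d: "\<delta> > 0"
    have "3/2*pi > (0::real)" by simp
    from sin_inv_freq[OF this d] show "\<exists>\<epsilon>::real. 0 < \<epsilon> \<and> \<epsilon> < \<delta> \<and> sin (1/\<epsilon>) = -1"
      by (simp only: sin_3over2_pi)
  qed
  have s1: "\<forall>\<delta>>0. \<exists>\<epsilon>::real. 0 < \<epsilon> \<and> \<epsilon> < \<delta> \<and> sin (1/\<epsilon>) = 1"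
  proof (intro allI impI)
    fix \<delta> :: real assume d: "\<delta> > 0"
    have "pi/2 > (0::real)" by simp
    from sin_inv_freq[OF this d] show "\<exists>\<epsilon>::real. 0 < \<epsilon> \<and> \<epsilon> < \<delta> \<and> sin (1/\<epsilon>) = 1"
      by (simp only: sin_pi_half)
  qed
  show "\<exists>r::real \<Rightarrow> real. r \<in> EM_sm \<and>
            (\<forall>e. idempotent_sm e \<longrightarrow> \<not> invertible_sm (\<lambda>\<epsilon>. r \<epsilon> + e \<epsilon>))"
  proof (intro exI conjI allI impI)
    show "(\<lambda>t. - (1 + sin (1/t)) / 2 :: real) \<in> EM_sm"
      unfolding EM_sm_def using smooth_R bound_sin
      by (auto intro!: exI[of _ "0::nat"] exI[of _ "1::real"] always_eventually)
    fix e :: "real \<Rightarrow> real" assume "idempotent_sm e"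
    then show "\<not> invertible_sm (\<lambda>\<epsilon>. - (1 + sin (1/\<epsilon>)) / 2 + e \<epsilon>)"
      by (rule main_nonexchange[rotated 2]) (use s0 s1 in force)+
  qed
  show "\<exists>r::real \<Rightarrow> complex. r \<in> EM_sm \<and>
            (\<forall>e. idempotent_sm e \<longrightarrow> \<not> invertible_sm (\<lambda>\<epsilon>. r \<epsilon> + e \<epsilon>))"
  proof (intro exI conjI allI impI)
    show "(\<lambda>t. complex_of_real (- (1 + sin (1/t)) / 2)) \<in> EM_sm"
    proof -
      have bC: "norm (complex_of_real (- (1 + sin (1/t)) / 2)) \<le> 1 * inverse (t ^ 0)" for t
        using bound_sin[of "1/t"] by (simp only: norm_of_real real_norm_def power_0 inverse_1 mult_1)
      show ?thesis unfolding EM_sm_def using smooth_C bC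
        by (intro CollectI conjI exI[of _ "0::nat"] exI[of _ "1::real"] always_eventually allI) auto
    qed
    fix e :: "real \<Rightarrow> complex" assume "idempotent_sm e"
    then show "\<not> invertible_sm (\<lambda>\<epsilon>. complex_of_real (- (1 + sin (1/\<epsilon>)) / 2) + e \<epsilon>)"
      by (rule main_nonexchange[rotated 2]) (use s0 s1 in force)+
  qed
qed

end
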